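(* Let $f:\mathbb{R}^n\to\mathbb{R}$ be continuously differentiable and bounded below with $\nabla f$ Lipschitz continuous on $\mathbb{R}^n$, let $s$ be an integer with $0<s<n$, and let $\{\mathbf{x}^k\}$ be the sequence generated by the partial sparse-simplex method. Then for any $k$ with $\|\mathbf{x}^k\|_0<s$, $$f(\mathbf{x}^k)-f(\mathbf{x}^{k+1})\ge\frac{1}{2L_2(f)}\max_{i=1,\dots,n}(\nabla_i f(\mathbf{x}^k))^2,$$ and for any $k$ with $\|\mathbf{x}^k\|_0=s$, $f(\mathbf{x}^k)-f(\mathbf{x}^{k+1})\ge A(\mathbf{x}^k)$, where $$A(\mathbf{x})=\max\Big\{\frac{1}{2L_2(f)}\max_{i\in I_1(\mathbf{x})}(\nabla_i f(\mathbf{x}))^2,\ M_s(\mathbf{x})\Big[\max_{i\in I_0(\mathbf{x})}|\nabla_i f(\mathbf{x})|-\max_{i\in I_1(\mathbf{x})}|\nabla_i f(\mathbf{x})|-L_2(f)M_s(\mathbf{x})\Big]\Big\}.$$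
   Context: $\|\mathbf{x}\|_0$ is the number of nonzero components, $C_s=\{\mathbf{x}:\|\mathbf{x}\|_0\le s\}$, $I_1(\mathbf{x})=\{i:x_i\neq0\}$, $I_0(\mathbf{x})=\{i:x_i=0\}$, $M_s(\mathbf{x})$ the $s$-th largest absolute value among components of $\mathbf{x}$, $\mathbf{e}_i$ the $i$-th standard basis vector. For $i\neq j$, $\nabla_{i,j}f(\mathbf{x})\in\mathbb{R}^2$ is the vector of the $i$-th and $j$-th partial derivatives, $L_{i,j}(f)$ is a constant with $\|\nabla_{i,j}f(\mathbf{x})-\nabla_{i,j}f(\mathbf{x}+\mathbf{d})\|\le L_{i,j}(f)\|\mathbf{d}\|$ for all $\mathbf{x}$ and all $\mathbf{d}$ with at most two nonzero components, and $L_2(f)=\max_{i\neq j}L_{i,j}(f)$. Partial sparse-simplex method (all one-dimensional minima assumed attained): choose $\mathbf{x}^0\in C_s$. At step $k$: if $\|\mathbf{x}^k\|_0<s$, for each $i$ let $t_i\in\operatorname{argmin}_t f(\mathbf{x}^k+t\mathbf{e}_i)$, $f_i=\min_t f(\mathbf{x}^k+t\mathbf{e}_i)$, $i_k\in\operatorname{argmin}_i f_i$; if $f_{i_k}<f(\mathbf{x}^k)$ set $\mathbf{x}^{k+1}=\mathbf{x}^k+t_{i_k}\mathbf{e}_{i_k}$, else stop. If $\|\mathbf{x}^k\|_0=s$: for $i\in I_1(\mathbf{x}^k)$ let $f_i=\min_t f(\mathbf{x}^k+t\mathbf{e}_i)$; let $i_k^1\in\operatorname{argmin}\{f_i:i\in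 I_1(\mathbf{x}^k)\}$, $i_k^2\in\operatorname{argmax}\{|\nabla_i f(\mathbf{x}^k)|:i\in I_0(\mathbf{x}^k)\}$, $m_k\in\operatorname{argmin}\{|x_i^k|:i\in I_1(\mathbf{x}^k)\}$; let $D_k^1=\min_t f(\mathbf{x}^k+t\mathbf{e}_{i_k^1})$ with minimizer $T_k^1$, and $D_k^2=\min_t f(\mathbf{x}^k-x^k_{m_k}\mathbf{e}_{m_k}+t\mathbf{e}_{i_k^2})$ with minimizer $T_k^2$; if $D_k^1<D_k^2$ set $\mathbf{x}^{k+1}=\mathbf{x}^k+T_k^1\mathbf{e}_{i_k^1}$, else $\mathbf{x}^{k+1}=\mathbf{x}^k-x^k_{m_k}\mathbf{e}_{m_k}+T_k^2\mathbf{e}_{i_k^2}$. *)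

theory Defs
  imports "HOL-Analysis.Analysis" "HOL-Library.Multiset"
begin

definition l0norm :: "real^'n \<Rightarrow> nat" where
  "l0norm x = card {i. x $ i \<noteq> 0}"

definition I1 :: "real^'n \<Rightarrow> 'n set" where
  "I1 x = {i. x $ i \<noteq> 0}"

definition I0 :: "real^'n \<Rightarrow> 'n set" where
  "I0 x = {i. x $ i = 0}"

text \<open>M_s(x): the s-th largest absolute value among the components of x (s >= 1).\<close>
definition Ms :: "nat \<Rightarrow> real^'n \<Rightarrow> real" where
  "Ms s x = rev (sorted_list_of_multiset (image_mset (\<lambda>i. \<bar>x $ i\<bar>) (mset_set UNIV))) ! (s - 1)"

definition block_lipschitz :: "(real^'n \<Rightarrow> real^'n) \<Rightarrow> 'n \<Rightarrow> 'n \<Rightarrow> real \<Rightarrow> bool" where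
  "block_lipschitz G i j L \<longleftrightarrow>
     (\<forall>x d. card {l. d $ l \<noteq> 0} \<le> 2 \<longrightarrow>
        sqrt ((G x $ i - G (x + d) $ i)\<^sup>2 + (G x $ j - G (x + d) $ j)\<^sup>2) \<le> L * norm d)"

text \<open>One step of the partial sparse-simplex method from x to x' (G is the gradient of f).
  A step exists only when the method does not stop.\<close>
definition pss_step :: "(real^'n \<Rightarrow> real) \<Rightarrow> (real^'n \<Rightarrow> real^'n) \<Rightarrow> nat \<Rightarrow> real^'n \<Rightarrow> real^'n \<Rightarrow> bool" where
  "pss_step f G s x x' \<longleftrightarrow>
    (l0norm x < s \<and>
      (\<exists>i t. (\<forall>j u. f (x + t *\<^sub>R axis i 1) \<le> f (x + u *\<^sub>R axis j 1))
          \<and> f (x + t *\<^sub>R axis i 1) < f x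
          \<and> x' = x + t *\<^sub>R axis i 1))
    \<or>
    (l0norm x = s \<and>
      (\<exists>i1 T1 i2 m T2.
          i1 \<in> I1 x \<and> (\<forall>j\<in>I1 x. \<forall>u. f (x + T1 *\<^sub>R axis i1 1) \<le> f (x + u *\<^sub>R axis j 1))
        \<and> i2 \<in> I0 x \<and> (\<forall>j\<in>I0 x. \<bar>G x $ j\<bar> \<le> \<bar>G x $ i2\<bar>)
        \<and> m \<in> I1 x \<and> (\<forall>j\<in>I1 x. \<bar>x $ m\<bar> \<le> \<bar>x $ j\<bar>)
        \<and> (\<forall>u. f (x - (x $ m) *\<^sub>R axis m 1 + T2 *\<^sub>R axis i2 1)
               \<le> f (x - (x $ m) *\<^sub>R axis m 1 + u *\<^sub>R axis i2 1))
        \<and> x' = (if f (x + T1 *\<^sub>R axis i1 1) < f (x - (x $ m) *\<^sub>R axis m 1 + T2 *\<^sub>R axis i2 1)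
               then x + T1 *\<^sub>R axis i1 1
               else x - (x $ m) *\<^sub>R axis m 1 + T2 *\<^sub>R axis i2 1)))"

end

theory Submission
  imports Defs
begin


lemma cs2: "(p::real)*u + q * v \<le> sqrt (p^2+q^2) * sqrt (u^2+v^2)"
proof -
  have "(p * u+q * v)^2 \<le> (p^2+q^2)*(u^2+v^2)"
    using sum_squares_ge_zero[of "p * v - q * u" 0] by (simp add: power2_eq_square algebra_simps)
  hence "sqrt ((p * u+q * v)^2) \<le> sqrt ((p^2+q^2)*(u^2+v^2))" using real_sqrt_le_mono by blast
  thus ?thesis by (simp add: real_sqrt_mult)
qed

lemma inner_two:
  fixes y :: "real^'n"
  assumes "a \<noteq> b"
  shows "y \<bullet> (p *\<^sub>R axis a 1 + q *\<^sub>R axis b 1) = p * y$a + q * y$b"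
  by (simp add: inner_add_right inner_axis)

lemma norm_two:
  assumes "(a::'n) \<noteq> b"
  shows "norm (p *\<^sub>R axis a (1::real) + q *\<^sub>R axis b 1 :: real^'n) = sqrt (p^2+q^2)"
  using assms by (simp add: norm_eq_sqrt_inner inner_add_left inner_add_right inner_axis_axis power2_eq_square)

lemma card2:
  assumes "(a::'n::finite) \<noteq> b"
  shows "card {l. (p *\<^sub>R axis a (1::real) + q *\<^sub>R axis b 1 :: real^'n) $ l \<noteq> 0} \<le> 2"
proof -
  have "{l. (p *\<^sub>R axis a (1::real) + q *\<^sub>R axis b 1 :: real^'n) $ l \<noteq> 0} \<subseteq> {a,b}"
    by (auto simp: axis_def)
  hence "card {l. (p *\<^sub>R axis a (1::real) + q *\<^sub>R axis b 1 :: real^'n) $ l \<noteq> 0} \<le> card {a,b}"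
    by (intro card_mono) auto
  thus ?thesis using assms by simp
qed

lemma descent:
  fixes f :: "real^'n \<Rightarrow> real" and G :: "real^'n \<Rightarrow> real^'n"
  assumes grad: "\<And>y. (f has_derivative (\<lambda>h. G y \<bullet> h)) (at y)"
    and bl: "block_lipschitz G a b L" and ab: "a \<noteq> b"
  shows "f (x + p *\<^sub>R axis a 1 + q *\<^sub>R axis b 1) \<le> f x + p * G x $ a + q * G x $ b + L/2 * (p^2+q^2)"
proof -
  define d where "d = (p *\<^sub>R axis a (1::real) + q *\<^sub>R axis b 1 :: real^'n)"
  define h where "h t = f (x + t *\<^sub>R d) - t * (G x \<bullet> d) - L/2 * t^2 * (p^2+q^2)" for t
  define h' where "h' t = G (x + t *\<^sub>R d) \<bullet> d - G x \<bullet> d - L * t * (p^2+q^2)" for t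
  have der: "(h has_real_derivative h' t) (at t)" for t
  proof -
    have "((\<lambda>t. x + t *\<^sub>R d) has_derivative (\<lambda>h. h *\<^sub>R d)) (at t)"
      by (auto intro!: derivative_eq_intros)
    from has_derivative_compose[OF this grad]
    have "((\<lambda>t. f (x + t *\<^sub>R d)) has_derivative (\<lambda>h. G (x + t *\<^sub>R d) \<bullet> (h *\<^sub>R d))) (at t)"
      by (simp add: o_def)
    hence "((\<lambda>t. f (x + t *\<^sub>R d)) has_real_derivative (G (x + t *\<^sub>R d) \<bullet> d)) (at t)"
      unfolding has_field_derivative_def by (simp add: mult.commute[of _ "G (x + t *\<^sub>R d) \<bullet> d"])
    thus ?thesis unfolding h_def h'_def
      by (auto intro!: derivative_eq_intros simp: power2_eq_square)
  qed
  have h'le: "h' t \<le> 0" if "0 \<le> t" for t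
  proof -
    have "card {l. (t *\<^sub>R d) $ l \<noteq> 0} \<le> 2"
      using card2[OF ab, of "t*p" "t*q"] by (simp add: d_def scaleR_add_right)
    with bl have "sqrt ((G x $ a - G (x + t *\<^sub>R d) $ a)\<^sup>2 + (G x $ b - G (x + t *\<^sub>R d) $ b)\<^sup>2) \<le> L * norm (t *\<^sub>R d)"
      unfolding block_lipschitz_def by blast
    moreover have "norm (t *\<^sub>R d) = t * sqrt (p^2+q^2)"
      using that norm_two[OF ab] by (simp add: d_def)
    moreover have "G (x + t *\<^sub>R d) \<bullet> d - G x \<bullet> d
        = (G (x + t *\<^sub>R d) $ a - G x $ a) * p + (G (x + t *\<^sub>R d) $ b - G x $ b) * q"
      using inner_two[OF ab] by (simp add: d_def algebra_simps)
    moreover have "(G (x + t *\<^sub>R d) $ a - G x $ a) * p + (G (x + t *\<^sub>R d) $ b - G x $ b) * q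
        \<le> sqrt ((G x $ a - G (x + t *\<^sub>R d) $ a)\<^sup>2 + (G x $ b - G (x + t *\<^sub>R d) $ b)\<^sup>2) * sqrt (p^2+q^2)"
      using cs2[of "G (x + t *\<^sub>R d) $ a - G x $ a" p "G (x + t *\<^sub>R d) $ b - G x $ b" q]
      by (simp add: power2_commute)
    ultimately have A: "G (x + t *\<^sub>R d) \<bullet> d - G x \<bullet> d \<le> sqrt ((G x $ a - G (x + t *\<^sub>R d) $ a)\<^sup>2 + (G x $ b - G (x + t *\<^sub>R d) $ b)\<^sup>2) * sqrt (p^2+q^2)"
      and B: "sqrt ((G x $ a - G (x + t *\<^sub>R d) $ a)\<^sup>2 + (G x $ b - G (x + t *\<^sub>R d) $ b)\<^sup>2) \<le> L * (t * sqrt (p^2+q^2))"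
      by auto
    have "G (x + t *\<^sub>R d) \<bullet> d - G x \<bullet> d \<le> L * (t * sqrt (p^2+q^2)) * sqrt (p^2+q^2)"
      using order_trans[OF A mult_right_mono[OF B real_sqrt_ge_zero]] by simp
    hence "G (x + t *\<^sub>R d) \<bullet> d - G x \<bullet> d \<le> L * t * (sqrt (p^2+q^2) * sqrt (p^2+q^2))"
      by (simp add: mult.assoc)
    hence "G (x + t *\<^sub>R d) \<bullet> d - G x \<bullet> d \<le> L * t * (p^2+q^2)"
      by simp
    thus ?thesis unfolding h'_def by (simp add: mult.assoc)
  qed
  obtain z where z: "0 < z" "z < 1" "h 1 - h 0 = (1 - 0) * h' z"
    using MVT2[of 0 1 h h'] der by auto
  hence "h 1 \<le> h 0" using h'le[of z] by simp
  thus ?thesis unfolding h_def using inner_two[OF ab, of "G x" p q]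
    by (simp add: d_def add.assoc)
qed



lemma sorted_nth_char:
  fixes L :: "real list"
  assumes srt: "sorted L" and i: "i < length L"
    and lt: "length (filter (\<lambda>y. y < c) L) \<le> i"
    and le: "i < length (filter (\<lambda>y. y \<le> c) L)"
  shows "L ! i = c"
proof (rule ccontr)
  assume ne: "L ! i \<noteq> c"
  show False
  proof (cases "L ! i < c")
    case True
    have "{0..i} \<subseteq> {j. j < length L \<and> L ! j < c}"
    proof
      fix j assume "j \<in> {0..i}"
      hence "j \<le> i" by simp
      hence "L ! j \<le> L ! i" using sorted_nth_mono[OF srt _ i] by blast
      thus "j \<in> {j. j < length L \<and> L ! j < c}" using True \<open>j \<le> i\<close> i by auto
    qed
    hence "card {0..i} \<le> card {j. j < length L \<and> L ! j < c}" by (intro card_mono) auto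
    thus False using lt by (simp add: length_filter_conv_card)
  next
    case False
    hence gt: "c < L ! i" using ne by simp
    have "{j. j < length L \<and> L ! j \<le> c} \<subseteq> {0..<i}"
    proof
      fix j assume j: "j \<in> {j. j < length L \<and> L ! j \<le> c}"
      show "j \<in> {0..<i}"
      proof (rule ccontr)
        assume "j \<notin> {0..<i}"
        hence "i \<le> j" by simp
        hence "L ! i \<le> L ! j" using sorted_nth_mono[OF srt] j by blast
        thus False using j gt by simp
      qed
    qed
    hence "card {j. j < length L \<and> L ! j \<le> c} \<le> card {0..<i}" by (intro card_mono) auto
    thus False using le by (simp add: length_filter_conv_card)
  qed
qed

lemma count_filter:
  fixes x :: "real^'n"
  shows "length (filter P (sorted_list_of_multiset (image_mset (\<lambda>i. \<bar>x $ i\<bar>) (mset_set UNIV))))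
       = card {i. P \<bar>x $ i\<bar>}"
proof -
  have "length (filter P (sorted_list_of_multiset (image_mset (\<lambda>i. \<bar>x $ i\<bar>) (mset_set UNIV))))
      = size (mset (filter P (sorted_list_of_multiset (image_mset (\<lambda>i. \<bar>x $ i\<bar>) (mset_set UNIV)))))"
    by (simp only: size_mset)
  also have "\<dots> = card {i. P \<bar>x $ i\<bar>}"
    by (simp add: filter_mset_image_mset)
  finally show ?thesis .
qed

lemma Ms_eq:
  fixes x :: "real^'n"
  assumes l0: "l0norm x = s" and sp: "0 < s" and m: "m \<in> I1 x"
    and mmin: "\<forall>j\<in>I1 x. \<bar>x $ m\<bar> \<le> \<bar>x $ j\<bar>"
  shows "Ms s x = \<bar>x $ m\<bar>"
proof -
  define L where "L = sorted_list_of_multiset (image_mset (\<lambda>i. \<bar>x $ i\<bar>) (mset_set (UNIV::'n set)))"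
  have lenL: "length L = CARD('n)"
    unfolding L_def by (metis size_mset mset_sorted_list_of_multiset size_image_mset size_mset_set)
  have cardI1: "card {i. x $ i \<noteq> 0} = s" using l0 by (simp add: l0norm_def)
  have cardI0: "card {i. x $ i = 0} = CARD('n) - s"
  proof -
    have "{i. x $ i = 0} = UNIV - {i. x $ i \<noteq> 0}" by auto
    thus ?thesis using cardI1 by (simp add: card_Diff_subset)
  qed
  have sleN: "s \<le> CARD('n)" using cardI1 by (metis card_mono finite subset_UNIV card_UNIV)
  have xm: "x $ m \<noteq> 0" using m by (simp add: I1_def)
  have c1: "length (filter (\<lambda>y. y < \<bar>x $ m\<bar>) L) = CARD('n) - s"
  proof -
    have "{i. \<bar>x $ i\<bar> < \<bar>x $ m\<bar>} = {i. x $ i = 0}"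
      using mmin xm by (force simp: I1_def)
    thus ?thesis unfolding L_def count_filter using cardI0 by simp
  qed
  have c2: "CARD('n) - s < length (filter (\<lambda>y. y \<le> \<bar>x $ m\<bar>) L)"
  proof -
    have sub: "insert m {i. x $ i = 0} \<subseteq> {i. \<bar>x $ i\<bar> \<le> \<bar>x $ m\<bar>}" by auto
    have "card (insert m {i. x $ i = 0}) = Suc (CARD('n) - s)"
      using cardI0 xm by simp
    moreover have "card (insert m {i. x $ i = 0}) \<le> card {i. \<bar>x $ i\<bar> \<le> \<bar>x $ m\<bar>}"
      using sub by (intro card_mono) auto
    ultimately show ?thesis unfolding L_def count_filter by simp
  qed
  have "Ms s x = rev L ! (s - 1)" unfolding Ms_def L_def by simp
  also have "\<dots> = L ! (CARD('n) - s)"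
    using sp sleN lenL by (simp add: rev_nth Suc_diff_Suc)
  also have "\<dots> = \<bar>x $ m\<bar>"
    using sorted_nth_char[of L "CARD('n) - s" "\<bar>x $ m\<bar>"] c1 c2 lenL sp sleN
    unfolding L_def by simp
  finally show ?thesis .
qed



lemma alg1: "(L::real) \<noteq> 0 \<Longrightarrow> (- g / L) * g + L/2 * (- g / L)^2 = - (1 / (2 * L) * g^2)"
  by (simp add: power2_eq_square field_simps)

theorem lemma4p1:
  fixes f :: "real^'n \<Rightarrow> real" and G :: "real^'n \<Rightarrow> real^'n"
    and s :: nat and L2 :: real and x :: "nat \<Rightarrow> real^'n" and K k :: nat
  assumes grad: "\<And>y. (f has_derivative (\<lambda>h. G y \<bullet> h)) (at y)"
    and C1: "continuous_on UNIV G"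
    and bdd: "\<exists>c. \<forall>y. c \<le> f y"
    and lip: "\<exists>L. \<forall>y z. norm (G y - G z) \<le> L * norm (y - z)"
    and L2: "\<And>i j. i \<noteq> j \<Longrightarrow> block_lipschitz G i j L2"
    and attained: "\<And>y i. \<exists>t. \<forall>u. f (y + t *\<^sub>R axis i 1) \<le> f (y + u *\<^sub>R axis i 1)"
    and s_pos: "0 < s" and s_lt: "s < CARD('n)"
    and x0: "l0norm (x 0) \<le> s"
    and steps: "\<And>j. j < K \<Longrightarrow> pss_step f G s (x j) (x (Suc j))"
    and k: "k < K"
  shows "(l0norm (x k) < s \<longrightarrow>
            f (x k) - f (x (Suc k)) \<ge> 1 / (2 * L2) * (MAX i\<in>UNIV. (G (x k) $ i)\<^sup>2))
       \<and> (l0norm (x k) = s \<longrightarrow>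
            f (x k) - f (x (Suc k)) \<ge>
              max (1 / (2 * L2) * (MAX i\<in>I1 (x k). (G (x k) $ i)\<^sup>2))
                  (Ms s (x k) * ((MAX i\<in>I0 (x k). \<bar>G (x k) $ i\<bar>) - (MAX i\<in>I1 (x k). \<bar>G (x k) $ i\<bar>)
                                  - L2 * Ms s (x k))))"
proof -
  have other: "\<exists>b. b \<noteq> j" for j :: 'n
  proof (rule ccontr)
    assume "\<not> (\<exists>b. b \<noteq> j)"
    hence U: "(UNIV::'n set) = {j}" by blast
    have "CARD('n) = card {j}" by (subst U) (rule refl)
    hence "CARD('n) = 1" by simp
    thus False using s_pos s_lt by simp
  qed
  have coord: "f (y + u *\<^sub>R axis j 1) \<le> f y + u * G y $ j + L2/2 * u^2" for y u j
  proof -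
    obtain b where b: "b \<noteq> j" using other by blast
    have "j \<noteq> b" using b by simp
    from descent[OF grad L2[OF this] this, of y u 0] show ?thesis by simp
  qed
  have coord2: "\<exists>u. f (y + u *\<^sub>R axis j 1) \<le> f y - 1 / (2 * L2) * (G y $ j)\<^sup>2" for y j
  proof (cases "L2 = 0")
    case True thus ?thesis by (intro exI[of _ 0]) simp
  next
    case False
    have "f (y + (- G y $ j / L2) *\<^sub>R axis j 1) \<le> f y + (- G y $ j / L2) * G y $ j + L2/2 * (- G y $ j / L2)^2"
      by (rule coord)
    also have "\<dots> = f y - 1 / (2 * L2) * (G y $ j)\<^sup>2"
      using alg1[OF False, of "G y $ j"] by simp
    finally show ?thesis by blast
  qed
  define y where "y = x k"
  define y' where "y' = x (Suc k)"
  have step: "pss_step f G s y y'" using steps[OF k] by (simp add: y_def y'_def)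
  have fin: "finite (A::'n set)" for A by simp
  show ?thesis unfolding y_def[symmetric] y'_def[symmetric]
  proof (intro conjI impI)
    assume lt: "l0norm y < s"
    then obtain i t where it: "\<forall>j u. f (y + t *\<^sub>R axis i 1) \<le> f (y + u *\<^sub>R axis j 1)"
        and y': "y' = y + t *\<^sub>R axis i 1"
      using step lt unfolding pss_step_def by (elim disjE conjE exE) (blast, simp)
    obtain j where j: "(MAX i\<in>UNIV. (G y $ i)\<^sup>2) = (G y $ j)\<^sup>2"
    proof -
      have "(MAX i\<in>UNIV. (G y $ i)\<^sup>2) \<in> (\<lambda>i. (G y $ i)\<^sup>2) ` UNIV"
        by (rule Max_in) auto
      thus ?thesis using that by blast
    qed
    obtain u where u: "f (y + u *\<^sub>R axis j 1) \<le> f y - 1 / (2 * L2) * (G y $ j)\<^sup>2"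
      using coord2 by blast
    show "f y - f y' \<ge> 1 / (2 * L2) * (MAX i\<in>UNIV. (G y $ i)\<^sup>2)"
    proof -
      have "f y' \<le> f (y + u *\<^sub>R axis j 1)" using it y' by blast
      thus ?thesis using u unfolding j by linarith
    qed
  next
    assume eq: "l0norm y = s"
    then obtain i1 T1 i2 m T2 where
        i1: "i1 \<in> I1 y" and T1: "\<forall>j\<in>I1 y. \<forall>u. f (y + T1 *\<^sub>R axis i1 1) \<le> f (y + u *\<^sub>R axis j 1)"
        and i2: "i2 \<in> I0 y" and i2max: "\<forall>j\<in>I0 y. \<bar>G y $ j\<bar> \<le> \<bar>G y $ i2\<bar>"
        and m: "m \<in> I1 y" and mmin: "\<forall>j\<in>I1 y. \<bar>y $ m\<bar> \<le> \<bar>y $ j\<bar>"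
        and T2: "\<forall>u. f (y - (y $ m) *\<^sub>R axis m 1 + T2 *\<^sub>R axis i2 1)
               \<le> f (y - (y $ m) *\<^sub>R axis m 1 + u *\<^sub>R axis i2 1)"
        and y': "y' = (if f (y + T1 *\<^sub>R axis i1 1) < f (y - (y $ m) *\<^sub>R axis m 1 + T2 *\<^sub>R axis i2 1)
               then y + T1 *\<^sub>R axis i1 1
               else y - (y $ m) *\<^sub>R axis m 1 + T2 *\<^sub>R axis i2 1)"
      using step eq unfolding pss_step_def by (elim disjE conjE exE) (simp, blast)
    have D1: "f y' \<le> f (y + T1 *\<^sub>R axis i1 1)" and
         D2: "f y' \<le> f (y - (y $ m) *\<^sub>R axis m 1 + T2 *\<^sub>R axis i2 1)"
      using y' by auto
    have ne1: "I1 y \<noteq> {}" using m by auto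
    have ne0: "I0 y \<noteq> {}" using i2 by auto
    have bound1: "f y - f y' \<ge> 1 / (2 * L2) * (MAX i\<in>I1 y. (G y $ i)\<^sup>2)"
    proof -
      obtain j where jI: "j \<in> I1 y" and j: "(MAX i\<in>I1 y. (G y $ i)\<^sup>2) = (G y $ j)\<^sup>2"
      proof -
        have "(MAX i\<in>I1 y. (G y $ i)\<^sup>2) \<in> (\<lambda>i. (G y $ i)\<^sup>2) ` I1 y"
          by (rule Max_in) (auto simp: ne1)
        thus ?thesis using that by blast
      qed
      obtain u where u: "f (y + u *\<^sub>R axis j 1) \<le> f y - 1 / (2 * L2) * (G y $ j)\<^sup>2"
        using coord2 by blast
      have "f y' \<le> f (y + u *\<^sub>R axis j 1)" using T1 jI D1 order_trans by blast
      thus ?thesis using u unfolding j by linarith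
    qed
    have bound2: "f y - f y' \<ge> Ms s y * ((MAX i\<in>I0 y. \<bar>G y $ i\<bar>) - (MAX i\<in>I1 y. \<bar>G y $ i\<bar>)
                                  - L2 * Ms s y)"
    proof -
      have Ms: "Ms s y = \<bar>y $ m\<bar>" using Ms_eq[OF eq s_pos m mmin] .
      have mi2: "m \<noteq> i2" using m i2 by (auto simp: I1_def I0_def)
      define q where "q = (if G y $ i2 \<ge> 0 then - \<bar>y $ m\<bar> else \<bar>y $ m\<bar>)"
      have E0: "f (y + (- (y $ m)) *\<^sub>R axis m 1 + q *\<^sub>R axis i2 1)
          \<le> f y + (- (y $ m)) * G y $ m + q * G y $ i2 + L2/2 * ((- (y $ m))^2 + q^2)"
        by (rule descent[OF grad L2[OF mi2] mi2])
      have V: "y + (- (y $ m)) *\<^sub>R axis m 1 + q *\<^sub>R axis i2 1 = y - (y $ m) *\<^sub>R axis m 1 + q *\<^sub>R axis i2 1"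
        by simp
      have Q1: "q * G y $ i2 = - (\<bar>y $ m\<bar> * \<bar>G y $ i2\<bar>)" unfolding q_def by auto
      have Q2: "L2/2 * ((- (y $ m))^2 + q^2) = L2 * (\<bar>y $ m\<bar> * \<bar>y $ m\<bar>)"
        unfolding q_def by (simp add: power2_eq_square)
      have Q3: "(- (y $ m)) * G y $ m \<le> \<bar>y $ m\<bar> * \<bar>G y $ m\<bar>"
        by (metis abs_ge_self abs_minus_cancel abs_mult)
      have Q4: "\<bar>y $ m\<bar> * (\<bar>G y $ i2\<bar> - \<bar>G y $ m\<bar> - L2 * \<bar>y $ m\<bar>)
          = \<bar>y $ m\<bar> * \<bar>G y $ i2\<bar> - \<bar>y $ m\<bar> * \<bar>G y $ m\<bar> - L2 * (\<bar>y $ m\<bar> * \<bar>y $ m\<bar>)"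
        by (simp add: algebra_simps)
      have A: "f (y - (y $ m) *\<^sub>R axis m 1 + q *\<^sub>R axis i2 1)
          \<le> f y - \<bar>y $ m\<bar> * (\<bar>G y $ i2\<bar> - \<bar>G y $ m\<bar> - L2 * \<bar>y $ m\<bar>)"
        using E0 Q1 Q2 Q3 Q4 unfolding V by linarith
      have M0: "(MAX i\<in>I0 y. \<bar>G y $ i\<bar>) \<le> \<bar>G y $ i2\<bar>"
        using i2max ne0 by (intro Max.boundedI) auto
      have M1: "\<bar>G y $ m\<bar> \<le> (MAX i\<in>I1 y. \<bar>G y $ i\<bar>)"
        using m by (intro Max_ge) auto
      have "\<bar>y $ m\<bar> * ((MAX i\<in>I0 y. \<bar>G y $ i\<bar>) - (MAX i\<in>I1 y. \<bar>G y $ i\<bar>) - L2 * \<bar>y $ m\<bar>)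
          \<le> \<bar>y $ m\<bar> * (\<bar>G y $ i2\<bar> - \<bar>G y $ m\<bar> - L2 * \<bar>y $ m\<bar>)"
        using M0 M1 by (intro mult_left_mono) auto
      moreover have "f y' \<le> f (y - (y $ m) *\<^sub>R axis m 1 + q *\<^sub>R axis i2 1)" using D2 T2 order_trans by blast
      ultimately show ?thesis using A unfolding Ms by linarith
    qed
    show "f y - f y' \<ge> max (1 / (2 * L2) * (MAX i\<in>I1 y. (G y $ i)\<^sup>2))
                  (Ms s y * ((MAX i\<in>I0 y. \<bar>G y $ i\<bar>) - (MAX i\<in>I1 y. \<bar>G y $ i\<bar>)
                                  - L2 * Ms s y))"
      using bound1 bound2 by simp
  qed
qed

end
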